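(* Let $\tau\colon X\to B$ be a fibre bundle of simplicial sets whose base $B$ and whose fibre $F$ are partial groups (that is, reduced $N$-simplicial sets with inversion). Then the total space $X$ is again a partial group, i.e. a reduced $N$-simplicial set with inversion. In other words, the category of partial groups is closed under extensions (fibre bundles).
   Context: A simplicial set $X$ is reduced if $X_0$ is a single point $v$; its unit is $1_X=s_0(v)\in X_1$. The enumerating operator $E_n\colon X_n\to X_1\times\cdots\times X_1$ ($n$ factors) sends an $n$-simplex $\sigma\colon\Delta[n]\to X$ to the tuple of its edges $(\sigma|_{\{0,1\}},\sigma|_{\{1,2\}},\dots,\sigma|_{\{n-1,n\}})$. $X$ is an $N$-simplicial set if $E_n$ is injective for all $n\ge1$; a simplex with edges $x_1,\dots,x_n$ is then written $[x_1|\dots|x_n]$. The product operator $\Pi\colon X_n\to X_1$ sends $\sigma$ to its edge from vertex $0$ to vertex $n$. The opposite simplicial set $X^{op}$ has $X^{op}_n=X_n$, $d_i^{op}=d_{n-i}$, $s_i^{op}=s_{n-i}$. An inversion on a reduced $N$-simplicial set $X$ is a simplicial map $\nu\colon X\to X^{op}$ with $\nu\circ\nu=\mathrm{Id}$ such that for every $x\in X_n$ ($n\ge1$) the tuple $[\nu(x)|x]$ is a $2n$-simplex of $X$ with $\Pi([\nu(x)|x])=1_X$. A partial group is (identified with) a reduced $N$-simplicial set with inversion. A simplicial map $\tau\colon X\to B$ is a fibre bundle with fibre $F$ if $\tau$ is onto and for every simplex $b\colon\Delta[n]\to B$ there is an isomorphism $F\times\Delta[n]\cong X^b$ over $\Delta[n]$,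 where $X^b=\Delta[n]\times_B X$ is the pullback. *)

theory Defs
  imports Main
begin

text \<open>A monotone map [m] -> [n] is represented by a function nat => nat whose
  values on {0..m} are monotone and bounded by n.\<close>

definition mono_map :: "nat \<Rightarrow> nat \<Rightarrow> (nat \<Rightarrow> nat) \<Rightarrow> bool" where
  "mono_map m n \<theta> \<longleftrightarrow> (\<forall>i\<le>m. \<theta> i \<le> n) \<and> (\<forall>i j. i \<le> j \<and> j \<le> m \<longrightarrow> \<theta> i \<le> \<theta> j)"

record 'a sset =
  simp :: "nat \<Rightarrow> 'a set"
  sop :: "nat \<Rightarrow> nat \<Rightarrow> (nat \<Rightarrow> nat) \<Rightarrow> 'a \<Rightarrow> 'a"

definition simplicial_set :: "'a sset \<Rightarrow> bool" where
  "simplicial_set X \<longleftrightarrow>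
     (\<forall>m n \<theta> x. mono_map m n \<theta> \<and> x \<in> simp X n \<longrightarrow> sop X m n \<theta> x \<in> simp X m) \<and>
     (\<forall>n x. x \<in> simp X n \<longrightarrow> sop X n n (\<lambda>i. i) x = x) \<and>
     (\<forall>k m n \<psi> \<theta> x. mono_map k m \<psi> \<and> mono_map m n \<theta> \<and> x \<in> simp X n \<longrightarrow>
         sop X k m \<psi> (sop X m n \<theta> x) = sop X k n (\<theta> \<circ> \<psi>) x) \<and>
     (\<forall>m n \<theta> \<theta>' x. mono_map m n \<theta> \<and> (\<forall>i\<le>m. \<theta> i = \<theta>' i) \<and> x \<in> simp X n \<longrightarrow>
         sop X m n \<theta> x = sop X m n \<theta>' x)"

definition smap :: "'a sset \<Rightarrow> 'b sset \<Rightarrow> (nat \<Rightarrow> 'a \<Rightarrow> 'b) \<Rightarrow> bool" where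
  "smap X Y f \<longleftrightarrow>
     (\<forall>n x. x \<in> simp X n \<longrightarrow> f n x \<in> simp Y n) \<and>
     (\<forall>m n \<theta> x. mono_map m n \<theta> \<and> x \<in> simp X n \<longrightarrow>
         f m (sop X m n \<theta> x) = sop Y m n \<theta> (f n x))"

definition siso :: "'a sset \<Rightarrow> 'b sset \<Rightarrow> (nat \<Rightarrow> 'a \<Rightarrow> 'b) \<Rightarrow> bool" where
  "siso X Y f \<longleftrightarrow> smap X Y f \<and> (\<forall>n. bij_betw (f n) (simp X n) (simp Y n))"

text \<open>The standard n-simplex Delta[n]: its m-simplices are monotone maps
  [m] -> [n], written as sorted lists of length m+1 with entries <= n.\<close>

definition Delta :: "nat \<Rightarrow> nat list sset" where
  "Delta n = \<lparr> simp = (\<lambda>m. {xs. length xs = Suc m \<and> sorted xs \<and> (\<forall>x\<in>set xs. x \<le> n)}),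
               sop = (\<lambda>m k \<theta> xs. map (\<lambda>j. xs ! \<theta> j) [0..<Suc m]) \<rparr>"

definition prod_sset :: "'a sset \<Rightarrow> 'b sset \<Rightarrow> ('a \<times> 'b) sset" where
  "prod_sset X Y = \<lparr> simp = (\<lambda>n. simp X n \<times> simp Y n),
                     sop = (\<lambda>m n \<theta> p. (sop X m n \<theta> (fst p), sop Y m n \<theta> (snd p))) \<rparr>"

definition pullback_sset ::
  "'a sset \<Rightarrow> 'c sset \<Rightarrow> (nat \<Rightarrow> 'a \<Rightarrow> 'b) \<Rightarrow> (nat \<Rightarrow> 'c \<Rightarrow> 'b) \<Rightarrow> ('a \<times> 'c) sset" where
  "pullback_sset A C f g = \<lparr> simp = (\<lambda>n. {(a, c). a \<in> simp A n \<and> c \<in> simp C n \<and> f n a = g n c}),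
                     sop = (\<lambda>m n \<theta> p. (sop A m n \<theta> (fst p), sop C m n \<theta> (snd p))) \<rparr>"

definition char_map :: "'b sset \<Rightarrow> nat \<Rightarrow> 'b \<Rightarrow> nat \<Rightarrow> nat list \<Rightarrow> 'b" where
  "char_map B n b = (\<lambda>m xs. sop B m n (\<lambda>j. xs ! j) b)"

definition fibre_over :: "'x sset \<Rightarrow> 'b sset \<Rightarrow> (nat \<Rightarrow> 'x \<Rightarrow> 'b) \<Rightarrow> nat \<Rightarrow> 'b \<Rightarrow> (nat list \<times> 'x) sset" where
  "fibre_over X B \<tau> n b = pullback_sset (Delta n) X (char_map B n b) \<tau>"

definition fibre_bundle :: "'x sset \<Rightarrow> 'b sset \<Rightarrow> 'f sset \<Rightarrow> (nat \<Rightarrow> 'x \<Rightarrow> 'b) \<Rightarrow> bool" where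
  "fibre_bundle X B F \<tau> \<longleftrightarrow>
     smap X B \<tau> \<and>
     (\<forall>n. \<tau> n ` simp X n = simp B n) \<and>
     (\<forall>n b. b \<in> simp B n \<longrightarrow>
        (\<exists>\<phi>. siso (prod_sset F (Delta n)) (fibre_over X B \<tau> n b) \<phi> \<and>
             (\<forall>m p. p \<in> simp (prod_sset F (Delta n)) m \<longrightarrow> fst (\<phi> m p) = snd p)))"

definition reduced :: "'a sset \<Rightarrow> bool" where
  "reduced X \<longleftrightarrow> (\<exists>v. simp X 0 = {v})"

definition unit_of :: "'a sset \<Rightarrow> 'a" where
  "unit_of X = sop X 1 0 (\<lambda>_. 0) (THE v. simp X 0 = {v})"

definition edge :: "'a sset \<Rightarrow> nat \<Rightarrow> nat \<Rightarrow> 'a \<Rightarrow> 'a" where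
  "edge X n i x = sop X 1 n (\<lambda>j. i + j) x"

definition enum_op :: "'a sset \<Rightarrow> nat \<Rightarrow> 'a \<Rightarrow> 'a list" where
  "enum_op X n x = map (\<lambda>i. edge X n i x) [0..<n]"

definition prod_op :: "'a sset \<Rightarrow> nat \<Rightarrow> 'a \<Rightarrow> 'a" where
  "prod_op X n x = sop X 1 n (\<lambda>j. if j = 0 then 0 else n) x"

definition N_simplicial :: "'a sset \<Rightarrow> bool" where
  "N_simplicial X \<longleftrightarrow> (\<forall>n\<ge>1. inj_on (enum_op X n) (simp X n))"

text \<open>The opposite simplicial set: d_i^op = d_{n-i}, s_i^op = s_{n-i};
  i.e. theta^op acts as the conjugate of theta by the order reversals.\<close>

definition opp :: "'a sset \<Rightarrow> 'a sset" where
  "opp X = \<lparr> simp = simp X, sop = (\<lambda>m n \<theta> x. sop X m n (\<lambda>j. n - \<theta> (m - j)) x) \<rparr>"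

definition inversion :: "'a sset \<Rightarrow> (nat \<Rightarrow> 'a \<Rightarrow> 'a) \<Rightarrow> bool" where
  "inversion X \<nu> \<longleftrightarrow>
     smap X (opp X) \<nu> \<and>
     (\<forall>n x. x \<in> simp X n \<longrightarrow> \<nu> n (\<nu> n x) = x) \<and>
     (\<forall>n x. n \<ge> 1 \<and> x \<in> simp X n \<longrightarrow>
        (\<exists>y \<in> simp X (2 * n). enum_op X (2 * n) y = enum_op X n (\<nu> n x) @ enum_op X n x
                               \<and> prod_op X (2 * n) y = unit_of X))"

definition partial_group :: "'a sset \<Rightarrow> bool" where
  "partial_group X \<longleftrightarrow> simplicial_set X \<and> reduced X \<and> N_simplicial X \<and> (\<exists>\<nu>. inversion X \<nu>)"

end

theory Submission
  imports Defs
begin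


definition E :: "'a sset \<Rightarrow> nat \<Rightarrow> nat \<Rightarrow> nat \<Rightarrow> 'a \<Rightarrow> 'a" where
  "E X N a b y = sop X 1 N (\<lambda>j. if j = 0 then a else b) y"

lemma mono_E: "a \<le> b \<Longrightarrow> b \<le> N \<Longrightarrow> mono_map 1 N (\<lambda>j. if j = 0 then a else b)"
  unfolding mono_map_def by auto

lemma mono_comp: "mono_map k m \<psi> \<Longrightarrow> mono_map m n \<theta> \<Longrightarrow> mono_map k n (\<theta> \<circ> \<psi>)"
  unfolding mono_map_def by auto

locale ss = fixes X :: "'a sset" assumes ss: "simplicial_set X"
begin

lemma closed: "mono_map m n \<theta> \<Longrightarrow> x \<in> simp X n \<Longrightarrow> sop X m n \<theta> x \<in> simp X m"
  using ss unfolding simplicial_set_def by blast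
lemma sid: "x \<in> simp X n \<Longrightarrow> sop X n n (\<lambda>i. i) x = x"
  using ss unfolding simplicial_set_def by blast
lemma comp: "mono_map k m \<psi> \<Longrightarrow> mono_map m n \<theta> \<Longrightarrow> x \<in> simp X n \<Longrightarrow>
  sop X k m \<psi> (sop X m n \<theta> x) = sop X k n (\<theta> \<circ> \<psi>) x"
  using ss unfolding simplicial_set_def by blast
lemma cong: "mono_map m n \<theta> \<Longrightarrow> (\<And>i. i\<le>m \<Longrightarrow> \<theta> i = \<theta>' i) \<Longrightarrow> x \<in> simp X n \<Longrightarrow>
  sop X m n \<theta> x = sop X m n \<theta>' x"
  using ss unfolding simplicial_set_def by blast

lemma E_closed: "a \<le> b \<Longrightarrow> b \<le> N \<Longrightarrow> y \<in> simp X N \<Longrightarrow> E X N a b y \<in> simp X 1"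
  unfolding E_def by (rule closed[OF mono_E])

lemma E_sop: assumes "mono_map m N \<theta>" "Y \<in> simp X N" "i \<le> j" "j \<le> m"
  shows "E X m i j (sop X m N \<theta> Y) = E X N (\<theta> i) (\<theta> j) Y"
proof -
  have "E X m i j (sop X m N \<theta> Y) = sop X 1 N (\<theta> \<circ> (\<lambda>k. if k = 0 then i else j)) Y"
    unfolding E_def using assms by (intro comp mono_E) auto
  also have "\<dots> = E X N (\<theta> i) (\<theta> j) Y" unfolding E_def
    using assms by (intro cong mono_comp[OF mono_E]) (auto)
  finally show ?thesis .
qed

lemma E_id: "y \<in> simp X 1 \<Longrightarrow> E X 1 0 1 y = y"
  unfolding E_def using sid[of y 1] cong[of 1 1 "\<lambda>i. i" "\<lambda>j. if j = 0 then 0 else 1" y]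
  by (metis (no_types, lifting) One_nat_def le_Suc_eq le_zero_eq mono_map_def order_refl)

lemma edge_E: "i < n \<Longrightarrow> x \<in> simp X n \<Longrightarrow> edge X n i x = E X n i (Suc i) x"
  unfolding edge_def E_def by (rule cong) (auto simp: mono_map_def)

lemma prod_E: "x \<in> simp X n \<Longrightarrow> prod_op X n x = E X n 0 n x"
  unfolding prod_op_def E_def by simp

lemma enum_E: "x \<in> simp X n \<Longrightarrow> enum_op X n x = map (\<lambda>i. E X n i (Suc i) x) [0..<n]"
  unfolding enum_op_def by (auto simp: edge_E)

end

locale rn = ss + assumes red: "reduced X" and Nsimp: "N_simplicial X"
begin

definition v where "v = (THE v. simp X 0 = {v})"
lemma X0: "simp X 0 = {v}" using red unfolding reduced_def v_def by auto
abbreviation one where "one \<equiv> unit_of X"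
lemma one_def': "one = sop X 1 0 (\<lambda>_. 0) v" unfolding unit_of_def v_def by simp

lemma one_closed: "one \<in> simp X 1"
  unfolding one_def' by (rule closed) (auto simp: mono_map_def X0)

lemma const_one: assumes "y \<in> simp X n" "a \<le> n" shows "sop X 1 n (\<lambda>_. a) y = one"
proof -
  have "sop X 1 n (\<lambda>_. a) y = sop X 1 n ((\<lambda>_. a) \<circ> (\<lambda>_::nat. 0::nat)) y" by (simp add: comp_def)
  also have "\<dots> = sop X 1 0 (\<lambda>_. 0) (sop X 0 n (\<lambda>_. a) y)"
    using assms by (intro comp[symmetric]) (auto simp: mono_map_def)
  finally have 1: "sop X 1 n (\<lambda>_. a) y = sop X 1 0 (\<lambda>_. 0) (sop X 0 n (\<lambda>_. a) y)" .
  have "sop X 0 n (\<lambda>_. a) y \<in> simp X 0" using closed[of 0 n "\<lambda>_. a" y] assms by (auto simp: mono_map_def)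
  thus ?thesis using 1 X0 by (simp add: one_def')
qed

lemma E_const: "y \<in> simp X n \<Longrightarrow> a \<le> n \<Longrightarrow> E X n a a y = one"
  unfolding E_def using const_one by simp

lemma Neq: assumes "x \<in> simp X n" "y \<in> simp X n" "n \<ge> 1"
  "\<And>i. i < n \<Longrightarrow> E X n i (Suc i) x = E X n i (Suc i) y" shows "x = y"
proof -
  have "enum_op X n x = enum_op X n y" using assms by (simp add: enum_E)
  thus ?thesis using Nsimp assms unfolding N_simplicial_def inj_on_def by blast
qed

lemma two_left: assumes T: "T \<in> simp X 2" and h: "E X 2 0 1 T = one"
  shows "E X 2 0 2 T = E X 2 1 2 T"
proof -
  define e where "e = E X 2 1 2 T"
  have e: "e \<in> simp X 1" unfolding e_def using T by (rule E_closed[rotated 2]) auto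
  define \<theta> where "\<theta> = (\<lambda>j::nat. if j \<le> 1 then 0 else (1::nat))"
  have m: "mono_map 2 1 \<theta>" unfolding \<theta>_def mono_map_def by auto
  define T' where "T' = sop X 2 1 \<theta> e"
  have T': "T' \<in> simp X 2" unfolding T'_def by (rule closed[OF m e])
  have a: "E X 2 i j T' = E X 1 (\<theta> i) (\<theta> j) e" if "i \<le> j" "j \<le> 2" for i j
    unfolding T'_def using E_sop[OF m e that] .
  have "T' = T"
  proof (rule Neq[OF T' T])
    fix i :: nat assume "i < 2"
    then consider "i = 0" | "i = 1" by linarith
    thus "E X 2 i (Suc i) T' = E X 2 i (Suc i) T"
    proof cases
      case 1 thus ?thesis using a[of 0 1] h E_const[OF e, of 0] by (simp add: \<theta>_def)
    next
      case 2 thus ?thesis using a[of 1 2] E_id[OF e] by (simp add: \<theta>_def e_def numeral_2_eq_2)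
    qed
  qed simp
  thus ?thesis using a[of 0 2] E_id[OF e] by (simp add: \<theta>_def e_def)
qed

lemma two_right: assumes T: "T \<in> simp X 2" and h: "E X 2 1 2 T = one"
  shows "E X 2 0 2 T = E X 2 0 1 T"
proof -
  define e where "e = E X 2 0 1 T"
  have e: "e \<in> simp X 1" unfolding e_def using T by (rule E_closed[rotated 2]) auto
  define \<theta> where "\<theta> = (\<lambda>j::nat. if j = 0 then 0 else (1::nat))"
  have m: "mono_map 2 1 \<theta>" unfolding \<theta>_def mono_map_def by auto
  define T' where "T' = sop X 2 1 \<theta> e"
  have T': "T' \<in> simp X 2" unfolding T'_def by (rule closed[OF m e])
  have a: "E X 2 i j T' = E X 1 (\<theta> i) (\<theta> j) e" if "i \<le> j" "j \<le> 2" for i j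
    unfolding T'_def using E_sop[OF m e that] .
  have "T' = T"
  proof (rule Neq[OF T' T])
    fix i :: nat assume "i < 2"
    then consider "i = 0" | "i = 1" by linarith
    thus "E X 2 i (Suc i) T' = E X 2 i (Suc i) T"
    proof cases
      case 1 thus ?thesis using a[of 0 1] E_id[OF e] by (simp add: \<theta>_def e_def)
    next
      case 2 thus ?thesis using a[of 1 2] h E_const[OF e, of 1] by (simp add: \<theta>_def numeral_2_eq_2)
    qed
  qed simp
  thus ?thesis using a[of 0 2] E_id[OF e] by (simp add: \<theta>_def e_def)
qed

definition tri :: "nat \<Rightarrow> nat \<Rightarrow> nat \<Rightarrow> nat \<Rightarrow> nat" where
  "tri a b c = (\<lambda>j. if j = 0 then a else if j = 1 then b else c)"

lemma tri_mono: "a \<le> b \<Longrightarrow> b \<le> c \<Longrightarrow> c \<le> N \<Longrightarrow> mono_map 2 N (tri a b c)"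
  unfolding tri_def mono_map_def by auto

lemma tri_E: assumes "Y \<in> simp X N" "a \<le> b" "b \<le> c" "c \<le> N"
  shows "E X 2 0 1 (sop X 2 N (tri a b c) Y) = E X N a b Y"
        "E X 2 1 2 (sop X 2 N (tri a b c) Y) = E X N b c Y"
        "E X 2 0 2 (sop X 2 N (tri a b c) Y) = E X N a c Y"
  using E_sop[OF tri_mono[OF assms(2-4)] assms(1)] by (auto simp: tri_def)

lemma face_left: assumes "Y \<in> simp X N" "a \<le> b" "b \<le> c" "c \<le> N" "E X N a b Y = one"
  shows "E X N a c Y = E X N b c Y"
  using two_left[OF closed[OF tri_mono[OF assms(2-4)] assms(1)]] tri_E[OF assms(1-4)] assms(5) by simp

lemma face_right: assumes "Y \<in> simp X N" "a \<le> b" "b \<le> c" "c \<le> N" "E X N b c Y = one"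
  shows "E X N a c Y = E X N a b Y"
  using two_right[OF closed[OF tri_mono[OF assms(2-4)] assms(1)]] tri_E[OF assms(1-4)] assms(5) by simp

lemma tri_unique: assumes "T \<in> simp X 2" "T' \<in> simp X 2"
  "E X 2 0 1 T = E X 2 0 1 T'" "E X 2 1 2 T = E X 2 1 2 T'"
  shows "E X 2 0 2 T = E X 2 0 2 T'"
proof -
  have "T = T'" apply (rule Neq[OF assms(1,2)]) using assms(3,4)
    by (auto simp: less_Suc_eq numeral_2_eq_2)
  thus ?thesis by simp
qed

end



locale pg = rn + fixes \<nu> :: "nat \<Rightarrow> 'a \<Rightarrow> 'a" assumes inv: "inversion X \<nu>"
begin

lemma nu_closed: "x \<in> simp X n \<Longrightarrow> \<nu> n x \<in> simp X n"
  using inv unfolding inversion_def smap_def opp_def by auto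

lemma nu_nu: "x \<in> simp X n \<Longrightarrow> \<nu> n (\<nu> n x) = x"
  using inv unfolding inversion_def by auto

lemma nu_sop: "mono_map m n \<theta> \<Longrightarrow> x \<in> simp X n \<Longrightarrow>
   \<nu> m (sop X m n \<theta> x) = sop X m n (\<lambda>j. n - \<theta> (m - j)) (\<nu> n x)"
  using inv unfolding inversion_def smap_def opp_def by auto

lemma nu_E: assumes "x \<in> simp X n" "a \<le> b" "b \<le> n"
  shows "E X n (n - b) (n - a) (\<nu> n x) = \<nu> 1 (E X n a b x)"
proof -
  have "\<nu> 1 (E X n a b x) = sop X 1 n (\<lambda>j. n - (if 1 - j = 0 then a else b)) (\<nu> n x)"
    unfolding E_def by (rule nu_sop[OF mono_E[OF assms(2,3)] assms(1)])
  also have "\<dots> = E X n (n - b) (n - a) (\<nu> n x)" unfolding E_def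
    using assms by (intro cong) (auto simp: mono_map_def nu_closed)
  finally show ?thesis by simp
qed

lemma nu_one: "\<nu> 1 one = one"
proof -
  have "\<nu> 1 one = sop X 1 0 (\<lambda>j. 0 - (0::nat)) (\<nu> 0 v)"
    unfolding one_def' by (rule nu_sop) (auto simp: mono_map_def X0)
  moreover have "\<nu> 0 v = v" using nu_closed[of v 0] X0 by auto
  ultimately show ?thesis by (simp add: one_def')
qed

definition INV where "INV n x y \<longleftrightarrow> y \<in> simp X (2*n) \<and>
  (\<forall>i j. i \<le> j \<and> j \<le> n \<longrightarrow> E X (2*n) i j y = E X n i j (\<nu> n x)) \<and>
  (\<forall>i j. i \<le> j \<and> j \<le> n \<longrightarrow> E X (2*n) (n+i) (n+j) y = E X n i j x) \<and>
  E X (2*n) 0 (2*n) y = one"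

lemma INV_closed: "INV n x y \<Longrightarrow> y \<in> simp X (2*n)" unfolding INV_def by blast
lemma INV_front: "INV n x y \<Longrightarrow> i \<le> j \<Longrightarrow> j \<le> n \<Longrightarrow> E X (2*n) i j y = E X n i j (\<nu> n x)"
  unfolding INV_def by blast
lemma INV_back: "INV n x y \<Longrightarrow> i \<le> j \<Longrightarrow> j \<le> n \<Longrightarrow> E X (2*n) (n+i) (n+j) y = E X n i j x"
  unfolding INV_def by blast
lemma INV_prod: "INV n x y \<Longrightarrow> E X (2*n) 0 (2*n) y = one"
  unfolding INV_def by blast

lemma INV_ex: assumes x: "x \<in> simp X n" and n: "n \<ge> 1" shows "\<exists>y. INV n x y"
proof -
  obtain y where y: "y \<in> simp X (2*n)" and en: "enum_op X (2*n) y = enum_op X n (\<nu> n x) @ enum_op X n x"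
    and pr: "prod_op X (2*n) y = one"
    using inv x n unfolding inversion_def by blast
  have nx: "\<nu> n x \<in> simp X n" using nu_closed[OF x] .
  have en2: "map (\<lambda>i. E X (2*n) i (Suc i) y) [0..<2*n] =
     map (\<lambda>i. E X n i (Suc i) (\<nu> n x)) [0..<n] @ map (\<lambda>i. E X n i (Suc i) x) [0..<n]"
    using en by (simp add: enum_E y nx x)
  have e1: "E X (2*n) i (Suc i) y = E X n i (Suc i) (\<nu> n x)" if "i < n" for i
  proof -
    have "map (\<lambda>i. E X (2*n) i (Suc i) y) [0..<2*n] ! i = E X (2*n) i (Suc i) y" using that by simp
    thus ?thesis using en2 that by (simp add: nth_append)
  qed
  have e2: "E X (2*n) (n+i) (Suc (n+i)) y = E X n i (Suc i) x" if "i < n" for i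
  proof -
    have "map (\<lambda>i. E X (2*n) i (Suc i) y) [0..<2*n] ! (n+i) = E X (2*n) (n+i) (Suc (n+i)) y" using that by simp
    thus ?thesis using en2 that by (simp add: nth_append)
  qed
  have mf: "mono_map n (2*n) (\<lambda>j. j)" by (auto simp: mono_map_def)
  have mb: "mono_map n (2*n) (\<lambda>j. n + j)" by (auto simp: mono_map_def)
  have f: "sop X n (2*n) (\<lambda>j. j) y = \<nu> n x"
    apply (rule Neq[OF closed[OF mf y] nx n])
    using E_sop[OF mf y] e1 by simp
  have b: "sop X n (2*n) (\<lambda>j. n + j) y = x"
    apply (rule Neq[OF closed[OF mb y] x n])
    using E_sop[OF mb y] e2 by simp
  have "INV n x y" unfolding INV_def
  proof (intro conjI allI impI y)
    fix i j assume "i \<le> j \<and> j \<le> n"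
    thus "E X (2*n) i j y = E X n i j (\<nu> n x)" using E_sop[OF mf y, of i j] f by simp
  next
    fix i j assume "i \<le> j \<and> j \<le> n"
    thus "E X (2*n) (n+i) (n+j) y = E X n i j x" using E_sop[OF mb y, of i j] b by simp
  next show "E X (2*n) 0 (2*n) y = one" using pr prod_E[OF y] by simp
  qed
  thus ?thesis by blast
qed

lemma INV_mirror: assumes x: "x \<in> simp X n" and I: "INV n x y" and k: "k \<le> n"
  shows "E X (2*n) (n-k) (n+k) y = one"
proof (cases "k = 0")
  case True thus ?thesis using E_const I unfolding INV_def by auto
next
  case False
  have y: "y \<in> simp X (2*n)" using I unfolding INV_def by blast
  have mw: "mono_map k n (\<lambda>j. j)" using k by (auto simp: mono_map_def)
  define w where "w = sop X k n (\<lambda>j. j) x"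
  have w: "w \<in> simp X k" unfolding w_def by (rule closed[OF mw x])
  have Ew: "E X k i j w = E X n i j x" if "i \<le> j" "j \<le> k" for i j
    unfolding w_def using E_sop[OF mw x that] by simp
  obtain y' where I': "INV k w y'" using INV_ex[OF w] False by auto
  have y': "y' \<in> simp X (2*k)" using I' unfolding INV_def by blast
  have mm: "mono_map (2*k) (2*n) (\<lambda>j. j + n - k)" using k by (auto simp: mono_map_def)
  define y'' where "y'' = sop X (2*k) (2*n) (\<lambda>j. j + n - k) y"
  have y'': "y'' \<in> simp X (2*k)" unfolding y''_def by (rule closed[OF mm y])
  have Ey'': "E X (2*k) i j y'' = E X (2*n) (i + n - k) (j + n - k) y" if "i \<le> j" "j \<le> 2*k" for i j
    unfolding y''_def using E_sop[OF mm y that] by simp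
  have "y'' = y'"
  proof (rule Neq[OF y'' y'])
    show "1 \<le> 2*k" using False by simp
  next
    fix i assume i: "i < 2*k"
    show "E X (2*k) i (Suc i) y'' = E X (2*k) i (Suc i) y'"
    proof (cases "i < k")
      case True
      have "E X (2*k) i (Suc i) y'' = E X (2*n) (i + n - k) (Suc i + n - k) y" using Ey'' i by simp
      also have "\<dots> = E X n (i + n - k) (Suc i + n - k) (\<nu> n x)"
      proof -
        have "\<forall>i j. i \<le> j \<and> j \<le> n \<longrightarrow> E X (2*n) i j y = E X n i j (\<nu> n x)" using I unfolding INV_def by blast
        moreover have "i + n - k \<le> Suc i + n - k" "Suc i + n - k \<le> n" using True k by auto
        ultimately show ?thesis by blast
      qed
      also have "\<dots> = E X n (n - (k - i)) (n - (k - Suc i)) (\<nu> n x)"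
        using True k by (intro arg_cong2[where f="\<lambda>a b. E X n a b (\<nu> n x)"]) auto
      also have "\<dots> = \<nu> 1 (E X n (k - Suc i) (k - i) x)" by (rule nu_E[OF x]) (use True k in auto)
      also have "\<dots> = \<nu> 1 (E X k (k - Suc i) (k - i) w)" using Ew True by auto
      also have "\<dots> = E X k (k - (k - i)) (k - (k - Suc i)) (\<nu> k w)" by (rule nu_E[OF w, symmetric]) (use True in auto)
      also have "\<dots> = E X k i (Suc i) (\<nu> k w)" using True
        by (intro arg_cong2[where f="\<lambda>a b. E X k a b (\<nu> k w)"]) auto
      also have "\<dots> = E X (2*k) i (Suc i) y'" using INV_front[OF I', of i "Suc i"] True by auto
      finally show ?thesis .
    next
      case False
      define l where "l = i - k"
      have il: "i = k + l" "l < k" using False i unfolding l_def by auto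
      have "E X (2*k) i (Suc i) y'' = E X (2*n) (n + l) (n + Suc l) y"
      proof -
        have "i + n - k = n + l" "Suc i + n - k = n + Suc l" using il by auto
        thus ?thesis using Ey''[of i "Suc i"] i by simp
      qed
      also have "\<dots> = E X n l (Suc l) x" using INV_back[OF I, of l "Suc l"] il k by auto
      also have "\<dots> = E X k l (Suc l) w" using Ew il by auto
      also have "\<dots> = E X (2*k) (k + l) (k + Suc l) y'" using INV_back[OF I', of l "Suc l"] il by auto
      finally show ?thesis using il by simp
    qed
  qed
  hence "E X (2*n) (n-k) (n+k) y = E X (2*k) 0 (2*k) y'" using Ey''[of 0 "2*k"] k by (simp add: add.commute)
  thus ?thesis using I' unfolding INV_def by simp
qed

lemma prefix: assumes x: "x \<in> simp X m" and k: "1 \<le> k" "k \<le> m"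
  shows "\<exists>y \<in> simp X (Suc m). (\<forall>i j. i \<le> j \<and> j \<le> m \<longrightarrow> E X (Suc m) (Suc i) (Suc j) y = E X m i j x)
      \<and> E X (Suc m) 0 (Suc k) y = one"
proof -
  obtain y0 where I: "INV m x y0" using INV_ex[OF x] k by auto
  have y0: "y0 \<in> simp X (2*m)" using I unfolding INV_def by blast
  define \<theta> where "\<theta> = (\<lambda>j. if j = 0 then m - k else m + j - 1)"
  have mm: "mono_map (Suc m) (2*m) \<theta>" unfolding \<theta>_def mono_map_def using k by auto
  define y where "y = sop X (Suc m) (2*m) \<theta> y0"
  have y: "y \<in> simp X (Suc m)" unfolding y_def by (rule closed[OF mm y0])
  show ?thesis
  proof (intro bexI[OF _ y] conjI allI impI)
    fix i j assume a: "i \<le> j \<and> j \<le> m"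
    hence "E X (Suc m) (Suc i) (Suc j) y = E X (2*m) (m+i) (m+j) y0"
      unfolding y_def using E_sop[OF mm y0, of "Suc i" "Suc j"] by (simp add: \<theta>_def)
    thus "E X (Suc m) (Suc i) (Suc j) y = E X m i j x" using I a unfolding INV_def by auto
  next
    have "E X (Suc m) 0 (Suc k) y = E X (2*m) (m-k) (m+k) y0"
      unfolding y_def using E_sop[OF mm y0, of 0 "Suc k"] k by (simp add: \<theta>_def)
    thus "E X (Suc m) 0 (Suc k) y = one" using INV_mirror[OF x I k(2)] by simp
  qed
qed

lemma cancel_aux: assumes T: "T \<in> simp X 2"
  shows "\<exists>T3 \<in> simp X 2. E X 2 0 1 T3 = E X 2 0 2 T \<and> E X 2 1 2 T3 = \<nu> 1 (E X 2 1 2 T)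
           \<and> E X 2 0 2 T3 = E X 2 0 1 T"
proof -
  define s where "s = \<nu> 2 T"
  have s: "s \<in> simp X 2" unfolding s_def by (rule nu_closed[OF T])
  have ss: "\<nu> 2 s = T" unfolding s_def by (rule nu_nu[OF T])
  obtain Y where I: "INV 2 s Y" using INV_ex[OF s] by auto
  have Y: "Y \<in> simp X 4" using I unfolding INV_def by simp
  have front: "E X 4 i j Y = E X 2 i j T" if "i \<le> j" "j \<le> 2" for i j
    using I that ss unfolding INV_def by auto
  have "E X 4 2 3 Y = E X 2 0 1 s"
  proof -
    have "\<forall>i j. i \<le> j \<and> j \<le> 2 \<longrightarrow> E X (2*2) (2+i) (2+j) Y = E X 2 i j s" using I unfolding INV_def by blast
    hence "E X (2*2) (2+0) (2+1) Y = E X 2 0 1 s" by (metis le_numeral_extra(4) one_le_numeral zero_le_one)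
    thus ?thesis by simp
  qed
  also have "\<dots> = E X 2 (2 - 2) (2 - 1) (\<nu> 2 T)" by (simp add: s_def)
  also have "\<dots> = \<nu> 1 (E X 2 1 2 T)" using nu_E[OF T, of 1 2] by simp
  finally have e23: "E X 4 2 3 Y = \<nu> 1 (E X 2 1 2 T)" .
  have m13: "E X 4 1 3 Y = one" using INV_mirror[OF s I, of 1] by simp
  have e03: "E X 4 0 3 Y = E X 4 0 1 Y" using face_right[OF Y, of 0 1 3] m13 by simp
  show ?thesis
    apply (rule bexI[of _ "sop X 2 4 (tri 0 2 3) Y"])
    using tri_E[OF Y, of 0 2 3] front[of 0 2] front[of 0 1] e23 e03 apply simp
    by (rule closed[OF tri_mono Y]) auto
qed

lemma cancel: assumes T: "T \<in> simp X 2" and T': "T' \<in> simp X 2"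
  and "E X 2 1 2 T = E X 2 1 2 T'" "E X 2 0 2 T = E X 2 0 2 T'"
  shows "E X 2 0 1 T = E X 2 0 1 T'"
  using cancel_aux[OF T] cancel_aux[OF T'] tri_unique assms(3,4) by metis

end



lemma Delta_simp: "simp (Delta n) m = {xs. length xs = Suc m \<and> sorted xs \<and> (\<forall>x\<in>set xs. x \<le> n)}"
  by (simp add: Delta_def)
lemma Delta_sop: "sop (Delta n) m k \<theta> l = map (\<lambda>j. l ! \<theta> j) [0..<Suc m]"
  by (simp add: Delta_def)

lemma Delta_E: "E (Delta n) k i j l = [l ! i, l ! j]"
  by (simp add: E_def Delta_sop upt_rec)

lemma Delta_2: "a \<le> b \<Longrightarrow> b \<le> n \<Longrightarrow> [a, b] \<in> simp (Delta n) 1"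
  by (simp add: Delta_simp)

lemma Delta_ss: "simplicial_set (Delta n)"
  unfolding simplicial_set_def Delta_simp Delta_sop
proof (intro conjI allI impI)
  fix m k \<theta> x assume a: "mono_map m k \<theta> \<and> x \<in> {xs. length xs = Suc k \<and> sorted xs \<and> (\<forall>x\<in>set xs. x \<le> n)}"
  show "map (\<lambda>j. x ! \<theta> j) [0..<Suc m] \<in> {xs. length xs = Suc m \<and> sorted xs \<and> (\<forall>x\<in>set xs. x \<le> n)}"
  proof -
    have 1: "\<forall>i\<le>m. \<theta> i \<le> k" "\<forall>i j. i \<le> j \<and> j \<le> m \<longrightarrow> \<theta> i \<le> \<theta> j"
      using a unfolding mono_map_def by auto
    have 2: "length x = Suc k" "sorted x" "\<forall>y\<in>set x. y \<le> n" using a by auto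
    have s: "sorted (map (\<lambda>j. x ! \<theta> j) [0..<Suc m])"
      unfolding sorted_iff_nth_mono
    proof (intro allI impI)
      fix i j assume ij: "i \<le> j" "j < length (map (\<lambda>j. x ! \<theta> j) [0..<Suc m])"
      hence "i < Suc m" "j < Suc m" by auto
      moreover have "x ! \<theta> i \<le> x ! \<theta> j" using 1 2 ij \<open>j < Suc m\<close>
        by (intro sorted_nth_mono) (auto simp: less_Suc_eq_le)
      ultimately show "map (\<lambda>j. x ! \<theta> j) [0..<Suc m] ! i \<le> map (\<lambda>j. x ! \<theta> j) [0..<Suc m] ! j"
        by (simp del: upt_Suc)
    qed
    have "\<forall>y\<in>set (map (\<lambda>j. x ! \<theta> j) [0..<Suc m]). y \<le> n"
      using 1 2 by (auto simp del: upt_Suc simp: less_Suc_eq_le)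
    thus ?thesis using s by (simp del: upt_Suc)
  qed
next
  fix n' x assume "x \<in> {xs. length xs = Suc n' \<and> sorted xs \<and> (\<forall>x\<in>set xs. x \<le> n)}"
  thus "map (\<lambda>j. x ! j) [0..<Suc n'] = x" using map_nth[of x] by (simp del: upt_Suc)
next
  fix k m n' \<psi> \<theta> x
  show "map (\<lambda>j. map (\<lambda>j. x ! \<theta> j) [0..<Suc m] ! \<psi> j) [0..<Suc k] = map (\<lambda>j. x ! (\<theta> \<circ> \<psi>) j) [0..<Suc k]"
    if "mono_map k m \<psi> \<and> mono_map m n' \<theta> \<and> x \<in> {xs. length xs = Suc n' \<and> sorted xs \<and> (\<forall>x\<in>set xs. x \<le> n)}"
  proof -
    have "\<And>j. j < Suc k \<Longrightarrow> \<psi> j < Suc m" using that unfolding mono_map_def by (auto simp: less_Suc_eq_le)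
    thus ?thesis by (intro map_cong refl) (simp del: upt_Suc)
  qed
next
  fix m n' \<theta> \<theta>' x
  show "map (\<lambda>j. x ! \<theta> j) [0..<Suc m] = map (\<lambda>j. x ! \<theta>' j) [0..<Suc m]"
    if "mono_map m n' \<theta> \<and> (\<forall>i\<le>m. \<theta> i = \<theta>' i) \<and> x \<in> {xs. length xs = Suc n' \<and> sorted xs \<and> (\<forall>x\<in>set xs. x \<le> n)}"
    using that by (auto simp: less_Suc_eq_le)
qed

locale bun = X: ss X + B: pg B nB + F: pg F nF
  for X :: "'x sset" and B :: "'b sset" and F :: "'f sset" and nB nF +
  fixes \<tau> :: "nat \<Rightarrow> 'x \<Rightarrow> 'b"
  assumes fb: "fibre_bundle X B F \<tau>"
begin

lemma tau_closed: "x \<in> simp X n \<Longrightarrow> \<tau> n x \<in> simp B n"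
  using fb unfolding fibre_bundle_def smap_def by blast
lemma tau_sop: "mono_map m n \<theta> \<Longrightarrow> x \<in> simp X n \<Longrightarrow> \<tau> m (sop X m n \<theta> x) = sop B m n \<theta> (\<tau> n x)"
  using fb unfolding fibre_bundle_def smap_def by blast
lemma tau_onto: "\<tau> n ` simp X n = simp B n"
  using fb unfolding fibre_bundle_def by blast
lemma tau_E: "x \<in> simp X N \<Longrightarrow> a \<le> b \<Longrightarrow> b \<le> N \<Longrightarrow> \<tau> 1 (E X N a b x) = E B N a b (\<tau> N x)"
  unfolding E_def by (rule tau_sop[OF mono_E])

definition TRIV where "TRIV n b \<psi> \<longleftrightarrow>
   (\<forall>m f l. f \<in> simp F m \<and> l \<in> simp (Delta n) m \<longrightarrow> \<psi> m f l \<in> simp X m \<and> \<tau> m (\<psi> m f l) = char_map B n b m l) \<and>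
   (\<forall>m k \<theta> f l. mono_map m k \<theta> \<and> f \<in> simp F k \<and> l \<in> simp (Delta n) k \<longrightarrow>
        \<psi> m (sop F m k \<theta> f) (sop (Delta n) m k \<theta> l) = sop X m k \<theta> (\<psi> k f l)) \<and>
   (\<forall>m x l. x \<in> simp X m \<and> l \<in> simp (Delta n) m \<and> char_map B n b m l = \<tau> m x \<longrightarrow>
        (\<exists>f \<in> simp F m. \<psi> m f l = x)) \<and>
   (\<forall>m f f' l. f \<in> simp F m \<and> f' \<in> simp F m \<and> l \<in> simp (Delta n) m \<and> \<psi> m f l = \<psi> m f' l \<longrightarrow> f = f')"

lemma triv_ex: assumes b: "b \<in> simp B n" shows "\<exists>\<psi>. TRIV n b \<psi>"
proof -
  obtain \<phi> where iso: "siso (prod_sset F (Delta n)) (fibre_over X B \<tau> n b) \<phi>"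
    and fs: "\<forall>m p. p \<in> simp (prod_sset F (Delta n)) m \<longrightarrow> fst (\<phi> m p) = snd p"
    using fb b unfolding fibre_bundle_def by blast
  have sp: "simp (prod_sset F (Delta n)) m = simp F m \<times> simp (Delta n) m" for m
    by (simp add: prod_sset_def)
  have sf: "simp (fibre_over X B \<tau> n b) m = {(l, x). l \<in> simp (Delta n) m \<and> x \<in> simp X m \<and> char_map B n b m l = \<tau> m x}" for m
    by (simp add: fibre_over_def pullback_sset_def)
  have bij: "bij_betw (\<phi> m) (simp F m \<times> simp (Delta n) m) (simp (fibre_over X B \<tau> n b) m)" for m
    using iso unfolding siso_def sp by blast
  have sm: "\<phi> m (sop (prod_sset F (Delta n)) m k \<theta> p) = sop (fibre_over X B \<tau> n b) m k \<theta> (\<phi> k p)"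
    if "mono_map m k \<theta>" "p \<in> simp F k \<times> simp (Delta n) k" for m k \<theta> p
    using iso that unfolding siso_def smap_def sp by blast
  define \<psi> where "\<psi> m f l = snd (\<phi> m (f, l))" for m f l
  have phi: "\<phi> m (f, l) = (l, \<psi> m f l)" if "f \<in> simp F m" "l \<in> simp (Delta n) m" for m f l
    using fs that sp unfolding \<psi>_def by (metis prod.collapse mem_Sigma_iff snd_conv)
  have "TRIV n b \<psi>" unfolding TRIV_def
  proof (intro conjI allI impI)
    fix m f l assume a: "f \<in> simp F m \<and> l \<in> simp (Delta n) m"
    hence "\<phi> m (f, l) \<in> simp (fibre_over X B \<tau> n b) m" using bij_betwE[OF bij] by blast
    thus "\<psi> m f l \<in> simp X m" "\<tau> m (\<psi> m f l) = char_map B n b m l" using phi a sf by auto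
  next
    fix m k \<theta> f l assume a: "mono_map m k \<theta> \<and> f \<in> simp F k \<and> l \<in> simp (Delta n) k"
    have "sop F m k \<theta> f \<in> simp F m" using a F.closed by blast
    moreover have "sop (Delta n) m k \<theta> l \<in> simp (Delta n) m"
      using a ss.closed[OF ss.intro[OF Delta_ss]] by blast
    moreover have "\<phi> m (sop F m k \<theta> f, sop (Delta n) m k \<theta> l) = sop (fibre_over X B \<tau> n b) m k \<theta> (l, \<psi> k f l)"
      using sm[of m k \<theta> "(f,l)"] a phi[of f k l] by (simp add: prod_sset_def)
    ultimately show "\<psi> m (sop F m k \<theta> f) (sop (Delta n) m k \<theta> l) = sop X m k \<theta> (\<psi> k f l)"
      using phi by (simp add: fibre_over_def pullback_sset_def)
  next
    fix m x l assume a: "x \<in> simp X m \<and> l \<in> simp (Delta n) m \<and> char_map B n b m l = \<tau> m x"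
    hence "(l, x) \<in> simp (fibre_over X B \<tau> n b) m" using sf by auto
    then obtain p where p: "p \<in> simp F m \<times> simp (Delta n) m" "\<phi> m p = (l, x)"
      using bij unfolding bij_betw_def by (metis imageE)
    obtain f l' where "p = (f, l')" by force
    with p phi show "\<exists>f\<in>simp F m. \<psi> m f l = x" by auto
  next
    fix m f f' l assume a: "f \<in> simp F m \<and> f' \<in> simp F m \<and> l \<in> simp (Delta n) m \<and> \<psi> m f l = \<psi> m f' l"
    hence "\<phi> m (f, l) = \<phi> m (f', l)" using phi by simp
    thus "f = f'" using bij a unfolding bij_betw_def inj_on_def by blast
  qed
  thus ?thesis by blast
qed

lemma TRIV_closed: "TRIV n b \<psi> \<Longrightarrow> f \<in> simp F m \<Longrightarrow> l \<in> simp (Delta n) m \<Longrightarrow> \<psi> m f l \<in> simp X m"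
  unfolding TRIV_def by blast
lemma TRIV_tau: "TRIV n b \<psi> \<Longrightarrow> f \<in> simp F m \<Longrightarrow> l \<in> simp (Delta n) m \<Longrightarrow> \<tau> m (\<psi> m f l) = char_map B n b m l"
  unfolding TRIV_def by blast
lemma TRIV_sop: "TRIV n b \<psi> \<Longrightarrow> mono_map m k \<theta> \<Longrightarrow> f \<in> simp F k \<Longrightarrow> l \<in> simp (Delta n) k \<Longrightarrow>
   \<psi> m (sop F m k \<theta> f) (sop (Delta n) m k \<theta> l) = sop X m k \<theta> (\<psi> k f l)"
  unfolding TRIV_def by blast
lemma TRIV_lift: "TRIV n b \<psi> \<Longrightarrow> x \<in> simp X m \<Longrightarrow> l \<in> simp (Delta n) m \<Longrightarrow> char_map B n b m l = \<tau> m x \<Longrightarrow>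
   \<exists>f \<in> simp F m. \<psi> m f l = x"
  unfolding TRIV_def by blast
lemma TRIV_inj: "TRIV n b \<psi> \<Longrightarrow> f \<in> simp F m \<Longrightarrow> f' \<in> simp F m \<Longrightarrow> l \<in> simp (Delta n) m \<Longrightarrow>
   \<psi> m f l = \<psi> m f' l \<Longrightarrow> f = f'"
  unfolding TRIV_def by blast

lemma TRIV_E: assumes T: "TRIV n b \<psi>" and f: "f \<in> simp F k" and l: "l \<in> simp (Delta n) k"
  and ij: "i \<le> j" "j \<le> k"
  shows "\<psi> 1 (E F k i j f) [l ! i, l ! j] = E X k i j (\<psi> k f l)"
  using TRIV_sop[OF T mono_E[OF ij] f l] unfolding E_def Delta_E[unfolded E_def] by simp

lemma Delta_nth_le: "l \<in> simp (Delta n) k \<Longrightarrow> i \<le> j \<Longrightarrow> j \<le> k \<Longrightarrow> l ! i \<le> l ! j \<and> l ! j \<le> n"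
  by (auto simp: Delta_simp sorted_iff_nth_mono)

lemma TRIV_E_eq: assumes T: "TRIV n b \<psi>" and f: "f \<in> simp F k" and l: "l \<in> simp (Delta n) k"
  and f': "f' \<in> simp F k'" and l': "l' \<in> simp (Delta n) k'"
  and ij: "i \<le> j" "j \<le> k" and ij': "i' \<le> j'" "j' \<le> k'"
  and ll: "l ! i = l' ! i'" "l ! j = l' ! j'"
  and xx: "E X k i j (\<psi> k f l) = E X k' i' j' (\<psi> k' f' l')"
  shows "E F k i j f = E F k' i' j' f'"
proof (rule TRIV_inj[OF T])
  show "E F k i j f \<in> simp F 1" using F.E_closed ij f by blast
  show "E F k' i' j' f' \<in> simp F 1" using F.E_closed ij' f' by blast
  show "[l ! i, l ! j] \<in> simp (Delta n) 1" using Delta_2 Delta_nth_le[OF l ij] by blast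
  show "\<psi> 1 (E F k i j f) [l ! i, l ! j] = \<psi> 1 (E F k' i' j' f') [l ! i, l ! j]"
    using TRIV_E[OF T f l ij] TRIV_E[OF T f' l' ij'] xx ll by simp
qed

end



lemma Delta_mono: "l \<in> simp (Delta n) m \<Longrightarrow> mono_map m n (\<lambda>j. l ! j)"
  unfolding mono_map_def Delta_simp by (auto simp: sorted_iff_nth_mono less_Suc_eq_le)

lemma idl_Delta: "[0..<Suc n] \<in> simp (Delta n) n"
  by (simp add: Delta_simp del: upt_Suc)

context bun begin

lemma char_E: assumes b: "b \<in> simp B n" and l: "l \<in> simp (Delta n) m" and ij: "i \<le> j" "j \<le> m"
  shows "E B m i j (char_map B n b m l) = E B n (l ! i) (l ! j) b"
  unfolding char_map_def using B.E_sop[OF Delta_mono[OF l] b ij] .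

lemma char_closed: "b \<in> simp B n \<Longrightarrow> l \<in> simp (Delta n) m \<Longrightarrow> char_map B n b m l \<in> simp B m"
  unfolding char_map_def by (rule B.closed[OF Delta_mono])

lemma char_id: assumes b: "b \<in> simp B n" shows "char_map B n b n [0..<Suc n] = b"
proof -
  have "char_map B n b n [0..<Suc n] = sop B n n (\<lambda>j. j) b" unfolding char_map_def
    by (rule B.cong[OF Delta_mono[OF idl_Delta] _ b]) (simp del: upt_Suc add: nth_upt less_Suc_eq_le)
  thus ?thesis using B.sid[OF b] by simp
qed

lemma X_reduced: "reduced X"
proof -
  have "simp B 0 \<noteq> {}" using B.X0 by auto
  then obtain x0 where x0: "x0 \<in> simp X 0" using tau_onto[of 0] by auto
  have uniq: "x = x0" if x: "x \<in> simp X 0" for x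
  proof -
    obtain \<psi> where T: "TRIV 0 B.v \<psi>" using triv_ex B.X0 by blast
    have l: "[0] \<in> simp (Delta 0) 0" by (simp add: Delta_simp)
    have c: "char_map B 0 B.v 0 [0] = \<tau> 0 y" if "y \<in> simp X 0" for y
      using char_closed[OF _ l, of B.v] tau_closed[OF that] B.X0 by auto
    obtain f where f: "f \<in> simp F 0" "\<psi> 0 f [0] = x" using TRIV_lift[OF T x l c[OF x]] by blast
    obtain f0 where f0: "f0 \<in> simp F 0" "\<psi> 0 f0 [0] = x0" using TRIV_lift[OF T x0 l c[OF x0]] by blast
    show ?thesis using f f0 F.X0 by auto
  qed
  show ?thesis unfolding reduced_def using x0 uniq by blast
qed

lemma X_Nsimp: "N_simplicial X"
  unfolding N_simplicial_def
proof (intro allI impI inj_onI)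
  fix n x x' assume n: "1 \<le> n" and x: "x \<in> simp X n" and x': "x' \<in> simp X n"
    and en: "enum_op X n x = enum_op X n x'"
  have ee: "E X n i (Suc i) x = E X n i (Suc i) x'" if "i < n" for i
  proof -
    have "map (\<lambda>i. E X n i (Suc i) x) [0..<n] ! i = map (\<lambda>i. E X n i (Suc i) x') [0..<n] ! i"
      using en X.enum_E[OF x] X.enum_E[OF x'] by metis
    thus ?thesis using that by simp
  qed
  have tt: "\<tau> n x = \<tau> n x'"
    apply (rule B.Neq[OF tau_closed[OF x] tau_closed[OF x'] n])
  proof -
    fix i assume i: "i < n"
    have "E B n i (Suc i) (\<tau> n x) = \<tau> 1 (E X n i (Suc i) x)" using tau_E[OF x, of i "Suc i"] i by simp
    also have "\<dots> = \<tau> 1 (E X n i (Suc i) x')" using ee i by simp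
    also have "\<dots> = E B n i (Suc i) (\<tau> n x')" using tau_E[OF x', of i "Suc i"] i by simp
    finally show "E B n i (Suc i) (\<tau> n x) = E B n i (Suc i) (\<tau> n x')" .
  qed
  define b where "b = \<tau> n x"
  have b: "b \<in> simp B n" unfolding b_def by (rule tau_closed[OF x])
  obtain \<psi> where T: "TRIV n b \<psi>" using triv_ex[OF b] by blast
  have l: "[0..<Suc n] \<in> simp (Delta n) n" by (rule idl_Delta)
  obtain f where f: "f \<in> simp F n" "\<psi> n f [0..<Suc n] = x"
    using TRIV_lift[OF T x l] char_id[OF b] b_def by metis
  obtain f' where f': "f' \<in> simp F n" "\<psi> n f' [0..<Suc n] = x'"
    using TRIV_lift[OF T x' l] char_id[OF b] b_def tt by metis
  have "f = f'"
  proof (rule F.Neq[OF f(1) f'(1) n])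
    fix i assume i: "i < n"
    show "E F n i (Suc i) f = E F n i (Suc i) f'"
      by (rule TRIV_E_eq[OF T f(1) l f'(1) l]) (use i ee f f' in \<open>auto simp del: upt_Suc\<close>)
  qed
  thus "x = x'" using f f' by simp
qed

end

locale bun2 = bun + X: rn X
begin
end

sublocale bun \<subseteq> bun2
  by (unfold_locales) (rule X_reduced, rule X_Nsimp)




context bun begin

lemma tau_one: "\<tau> 1 X.one = B.one"
proof -
  have "\<tau> 1 X.one = sop B 1 0 (\<lambda>_. 0) (\<tau> 0 X.v)"
    unfolding X.one_def' by (rule tau_sop) (auto simp: mono_map_def X.X0)
  moreover have "\<tau> 0 X.v = B.v" using tau_closed[of X.v 0] X.X0 B.X0 by auto
  ultimately show ?thesis by (simp add: B.one_def')
qed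

lemma X_prefix: assumes x: "x \<in> simp X m" and k: "1 \<le> k" "k \<le> m"
  shows "\<exists>y \<in> simp X (Suc m). (\<forall>i j. i \<le> j \<and> j \<le> m \<longrightarrow> E X (Suc m) (Suc i) (Suc j) y = E X m i j x)
      \<and> E X (Suc m) 0 (Suc k) y = X.one"
proof -
  define b where "b = \<tau> m x"
  have b: "b \<in> simp B m" unfolding b_def by (rule tau_closed[OF x])
  obtain c where c: "c \<in> simp B (Suc m)"
    and Ec: "\<And>i j. i \<le> j \<Longrightarrow> j \<le> m \<Longrightarrow> E B (Suc m) (Suc i) (Suc j) c = E B m i j b"
    and c0: "E B (Suc m) 0 (Suc k) c = B.one"
    using B.prefix[OF b k] by blast
  obtain \<psi> where T: "TRIV (Suc m) c \<psi>" using triv_ex[OF c] by blast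
  define l1 where "l1 = map Suc [0..<Suc m]"
  have l1: "l1 \<in> simp (Delta (Suc m)) m" unfolding l1_def Delta_simp
    by (auto simp del: upt_Suc simp: sorted_map)
  have l1n: "l1 ! i = Suc i" if "i \<le> m" for i using that unfolding l1_def
    by (simp del: upt_Suc add: nth_upt less_Suc_eq_le)
  have ch1: "char_map B (Suc m) c m l1 = b"
  proof (rule B.Neq[OF char_closed[OF c l1] b])
    show "1 \<le> m" using k by simp
    fix i assume i: "i < m"
    show "E B m i (Suc i) (char_map B (Suc m) c m l1) = E B m i (Suc i) b"
      using char_E[OF c l1, of i "Suc i"] i l1n[of i] l1n[of "Suc i"] Ec[of i "Suc i"] by simp
  qed
  obtain f where f: "f \<in> simp F m" "\<psi> m f l1 = x"
    using TRIV_lift[OF T x l1] ch1 b_def by metis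
  obtain G where G: "G \<in> simp F (Suc m)"
    and EG: "\<And>i j. i \<le> j \<Longrightarrow> j \<le> m \<Longrightarrow> E F (Suc m) (Suc i) (Suc j) G = E F m i j f"
    and G0: "E F (Suc m) 0 (Suc k) G = F.one"
    using F.prefix[OF f(1) k] by blast
  define rep where "rep = replicate (Suc (Suc m)) (Suc k)"
  have rep: "rep \<in> simp (Delta (Suc m)) (Suc m)" unfolding rep_def Delta_simp using k by auto
  have repn: "rep ! i = Suc k" if "i \<le> Suc m" for i using that unfolding rep_def by (subst nth_replicate) auto
  define w where "w = \<psi> (Suc m) G rep"
  have w: "w \<in> simp X (Suc m)" unfolding w_def by (rule TRIV_closed[OF T G rep])
  have tw: "\<tau> (Suc m) w = char_map B (Suc m) c (Suc m) rep" unfolding w_def by (rule TRIV_tau[OF T G rep])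
  have m0: "mono_map (Suc (Suc m)) (Suc m) (\<lambda>j. j - 1)" by (auto simp: mono_map_def)
  define W where "W = sop X (Suc (Suc m)) (Suc m) (\<lambda>j. j - 1) w"
  have W: "W \<in> simp X (Suc (Suc m))" unfolding W_def by (rule X.closed[OF m0 w])
  have EW: "E X (Suc (Suc m)) i j W = E X (Suc m) (i - 1) (j - 1) w" if "i \<le> j" "j \<le> Suc (Suc m)" for i j
    unfolding W_def using X.E_sop[OF m0 w that] .
  define pat where "pat = 0 # rep"
  have pat: "pat \<in> simp (Delta (Suc m)) (Suc (Suc m))" using rep unfolding pat_def Delta_simp by auto
  have patn: "pat ! Suc i = Suc k" if "i \<le> Suc m" for i using repn that unfolding pat_def by simp
  have chp: "char_map B (Suc m) c (Suc (Suc m)) pat = \<tau> (Suc (Suc m)) W"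
  proof (rule B.Neq[OF char_closed[OF c pat] tau_closed[OF W]])
    fix i assume i: "i < Suc (Suc m)"
    have lhs: "E B (Suc (Suc m)) i (Suc i) (char_map B (Suc m) c (Suc (Suc m)) pat) = B.one"
    proof (cases i)
      case 0 thus ?thesis using char_E[OF c pat, of 0 1] patn[of 0] c0 by (simp add: pat_def)
    next
      case (Suc i') thus ?thesis using char_E[OF c pat, of i "Suc i"] patn[of i'] patn[of "Suc i'"] i
          B.E_const[OF c, of "Suc k"] k by simp
    qed
    have "E B (Suc (Suc m)) i (Suc i) (\<tau> (Suc (Suc m)) W) = \<tau> 1 (E X (Suc m) (i - 1) i w)"
      using tau_E[OF W, of i "Suc i"] EW[of i "Suc i"] i by simp
    also have "\<dots> = E B (Suc m) (rep ! (i - 1)) (rep ! i) c"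
      using tau_E[OF w, of "i - 1" i] tw char_E[OF c rep, of "i - 1" i] i by simp
    also have "\<dots> = B.one" using repn[of "i - 1"] repn[of i] i B.E_const[OF c, of "Suc k"] k by simp
    finally show "E B (Suc (Suc m)) i (Suc i) (char_map B (Suc m) c (Suc (Suc m)) pat) =
        E B (Suc (Suc m)) i (Suc i) (\<tau> (Suc (Suc m)) W)" using lhs by simp
  qed simp
  obtain \<kappa> where \<kappa>: "\<kappa> \<in> simp F (Suc (Suc m))" "\<psi> (Suc (Suc m)) \<kappa> pat = W"
    using TRIV_lift[OF T W pat chp] by blast
  have Ek: "E F (Suc (Suc m)) (Suc i) (Suc j) \<kappa> = E F (Suc m) i j G" if ij: "i \<le> j" "j \<le> Suc m" for i j
    by (rule TRIV_E_eq[OF T \<kappa>(1) pat G rep]) (use ij patn repn EW \<kappa> w_def in auto)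
  define l2 where "l2 = [0, Suc k]"
  have l2: "l2 \<in> simp (Delta (Suc m)) 1" unfolding l2_def using Delta_2 k by simp
  have ch2: "char_map B (Suc m) c 1 l2 = \<tau> 1 X.one"
  proof -
    have "char_map B (Suc m) c 1 l2 = E B 1 0 1 (char_map B (Suc m) c 1 l2)"
      using B.E_id[OF char_closed[OF c l2]] by simp
    also have "\<dots> = B.one" using char_E[OF c l2, of 0 1] c0 by (simp add: l2_def)
    finally show ?thesis using tau_one by simp
  qed
  obtain z where z: "z \<in> simp F 1" "\<psi> 1 z l2 = X.one"
    using TRIV_lift[OF T X.one_closed l2 ch2] by blast
  have k01: "E F (Suc (Suc m)) 0 1 \<kappa> = z"
  proof -
    have "E F (Suc (Suc m)) 0 1 \<kappa> = E F 1 0 1 z"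
    proof (rule TRIV_E_eq[OF T \<kappa>(1) pat z(1) l2])
      show "pat ! 0 = l2 ! 0" "pat ! 1 = l2 ! 1" using patn[of 0] by (auto simp: pat_def l2_def)
      show "E X (Suc (Suc m)) 0 1 (\<psi> (Suc (Suc m)) \<kappa> pat) = E X 1 0 1 (\<psi> 1 z l2)"
        using \<kappa>(2) EW[of 0 1] z(2) X.E_id[OF X.one_closed] X.E_const[OF w, of 0] by simp
    qed auto
    thus ?thesis using F.E_id[OF z(1)] by simp
  qed
  define \<theta>1 where "\<theta>1 = (\<lambda>j::nat. if j = 0 then 0 else Suc j)"
  have m1: "mono_map (Suc m) (Suc (Suc m)) \<theta>1" unfolding \<theta>1_def mono_map_def by auto
  define g where "g = sop F (Suc m) (Suc (Suc m)) \<theta>1 \<kappa>"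
  have g: "g \<in> simp F (Suc m)" unfolding g_def by (rule F.closed[OF m1 \<kappa>(1)])
  have Eg: "E F (Suc m) i j g = E F (Suc (Suc m)) (\<theta>1 i) (\<theta>1 j) \<kappa>" if "i \<le> j" "j \<le> Suc m" for i j
    unfolding g_def using F.E_sop[OF m1 \<kappa>(1) that] .
  have Eg1: "E F (Suc m) (Suc i) (Suc j) g = E F m i j f" if "i \<le> j" "j \<le> m" for i j
    using Eg[of "Suc i" "Suc j"] Ek[of "Suc i" "Suc j"] EG[of i j] that by (simp add: \<theta>1_def)
  have Eg0: "E F (Suc m) 0 (Suc k) g = z"
  proof -
    have "E F (Suc (Suc m)) 1 (Suc (Suc k)) \<kappa> = F.one" using Ek[of 0 "Suc k"] G0 k by simp
    hence "E F (Suc (Suc m)) 0 (Suc (Suc k)) \<kappa> = E F (Suc (Suc m)) 0 1 \<kappa>"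
      using F.face_right[OF \<kappa>(1), of 0 1 "Suc (Suc k)"] k by simp
    thus ?thesis using Eg[of 0 "Suc k"] k01 k by (simp add: \<theta>1_def)
  qed
  define y where "y = \<psi> (Suc m) g [0..<Suc (Suc m)]"
  have idl: "[0..<Suc (Suc m)] \<in> simp (Delta (Suc m)) (Suc m)" by (rule idl_Delta)
  have idn: "[0..<Suc (Suc m)] ! i = i" if "i \<le> Suc m" for i using that
    by (simp del: upt_Suc add: nth_upt less_Suc_eq_le)
  have y: "y \<in> simp X (Suc m)" unfolding y_def by (rule TRIV_closed[OF T g idl])
  show ?thesis
  proof (intro bexI[OF _ y] conjI allI impI)
    fix i j assume ij: "i \<le> j \<and> j \<le> m"
    have "E X (Suc m) (Suc i) (Suc j) y = \<psi> 1 (E F (Suc m) (Suc i) (Suc j) g) [Suc i, Suc j]"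
      unfolding y_def using TRIV_E[OF T g idl, of "Suc i" "Suc j"] idn[of "Suc i"] idn[of "Suc j"] ij by simp
    also have "\<dots> = \<psi> 1 (E F m i j f) [l1 ! i, l1 ! j]" using Eg1[of i j] ij l1n[of i] l1n[of j] by simp
    also have "\<dots> = E X m i j x" using TRIV_E[OF T f(1) l1, of i j] ij f(2) by simp
    finally show "E X (Suc m) (Suc i) (Suc j) y = E X m i j x" .
  next
    have "E X (Suc m) 0 (Suc k) y = \<psi> 1 (E F (Suc m) 0 (Suc k) g) [0, Suc k]"
      unfolding y_def using TRIV_E[OF T g idl, of 0 "Suc k"] idn[of 0] idn[of "Suc k"] k by simp
    thus "E X (Suc m) 0 (Suc k) y = X.one" using Eg0 z(2) by (simp add: l2_def)
  qed
qed

end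



context bun begin

lemma X_MI_aux: assumes x: "x \<in> simp X n"
  shows "j \<le> n \<Longrightarrow> \<exists>y \<in> simp X (n + j). (\<forall>i i'. i \<le> i' \<and> i' \<le> n \<longrightarrow> E X (n + j) (j + i) (j + i') y = E X n i i' x)
          \<and> (\<forall>k \<le> j. E X (n + j) (j - k) (j + k) y = X.one)"
proof (induction j)
  case 0
  show ?case using x X.E_const[OF x] by auto
next
  case (Suc j)
  then obtain y where y: "y \<in> simp X (n + j)"
    and yb: "\<And>i i'. i \<le> i' \<Longrightarrow> i' \<le> n \<Longrightarrow> E X (n + j) (j + i) (j + i') y = E X n i i' x"
    and ym: "\<And>k. k \<le> j \<Longrightarrow> E X (n + j) (j - k) (j + k) y = X.one" by auto
  obtain y' where y': "y' \<in> simp X (Suc (n + j))"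
    and yb': "\<And>i i'. i \<le> i' \<Longrightarrow> i' \<le> n + j \<Longrightarrow> E X (Suc (n + j)) (Suc i) (Suc i') y' = E X (n + j) i i' y"
    and ym': "E X (Suc (n + j)) 0 (Suc (Suc (2 * j))) y' = X.one"
    using X_prefix[OF y, of "Suc (2 * j)"] Suc.prems by auto
  show ?case
  proof (intro bexI[of _ y'] conjI allI impI)
    fix i i' assume a: "i \<le> i' \<and> i' \<le> n"
    have "E X (n + Suc j) (Suc j + i) (Suc j + i') y' = E X (Suc (n + j)) (Suc (j + i)) (Suc (j + i')) y'" by simp
    also have "\<dots> = E X (n + j) (j + i) (j + i') y" using yb' a by simp
    also have "\<dots> = E X n i i' x" using yb a by simp
    finally show "E X (n + Suc j) (Suc j + i) (Suc j + i') y' = E X n i i' x" .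
  next
    fix k assume k: "k \<le> Suc j"
    show "E X (n + Suc j) (Suc j - k) (Suc j + k) y' = X.one"
    proof (cases "k = Suc j")
      case True thus ?thesis using ym' by (simp add: mult_2)
    next
      case False
      hence "E X (n + Suc j) (Suc j - k) (Suc j + k) y' = E X (Suc (n + j)) (Suc (j - k)) (Suc (j + k)) y'"
        using k by (simp add: Suc_diff_le)
      also have "\<dots> = E X (n + j) (j - k) (j + k) y" using yb' k False Suc.prems by simp
      also have "\<dots> = X.one" using ym k False by simp
      finally show ?thesis .
    qed
  next
    show "y' \<in> simp X (n + Suc j)" using y' by simp
  qed
qed

lemma X_MI: assumes x: "x \<in> simp X n"
  shows "\<exists>y \<in> simp X (2 * n). (\<forall>i j. i \<le> j \<and> j \<le> n \<longrightarrow> E X (2 * n) (n + i) (n + j) y = E X n i j x)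
          \<and> (\<forall>k \<le> n. E X (2 * n) (n - k) (n + k) y = X.one)"
  using X_MI_aux[OF x, of n] by (simp add: mult_2)

lemma X_U: assumes t: "t \<in> simp X 2" and t': "t' \<in> simp X 2"
  and e: "E X 2 1 2 t = E X 2 1 2 t'" and p: "E X 2 0 2 t = X.one" "E X 2 0 2 t' = X.one"
  shows "E X 2 0 1 t = E X 2 0 1 t'"
proof -
  have tb: "\<tau> 2 t \<in> simp B 2" "\<tau> 2 t' \<in> simp B 2" using tau_closed t t' by auto
  have "E B 2 0 1 (\<tau> 2 t) = E B 2 0 1 (\<tau> 2 t')"
    apply (rule B.cancel[OF tb])
    using tau_E[OF t, of 1 2] tau_E[OF t', of 1 2] tau_E[OF t, of 0 2] tau_E[OF t', of 0 2] e p by auto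
  hence tt: "\<tau> 2 t = \<tau> 2 t'"
    apply (intro B.Neq[OF tb]) using tau_E[OF t, of 1 2] tau_E[OF t', of 1 2] e
    by (auto simp: less_Suc_eq numeral_2_eq_2)
  define c where "c = \<tau> 2 t"
  have c: "c \<in> simp B 2" using tb c_def by simp
  obtain \<psi> where T: "TRIV 2 c \<psi>" using triv_ex[OF c] by blast
  have l: "[0..<Suc 2] \<in> simp (Delta 2) 2" by (rule idl_Delta)
  have ln: "[0..<Suc 2] ! i = i" if "i \<le> 2" for i using that by (simp del: upt_Suc add: nth_upt less_Suc_eq_le)
  obtain g where g: "g \<in> simp F 2" "\<psi> 2 g [0..<Suc 2] = t"
    using TRIV_lift[OF T t l] char_id[OF c] c_def by metis
  obtain g' where g': "g' \<in> simp F 2" "\<psi> 2 g' [0..<Suc 2] = t'"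
    using TRIV_lift[OF T t' l] char_id[OF c] c_def tt by metis
  have "E F 2 1 2 g = E F 2 1 2 g'"
    by (rule TRIV_E_eq[OF T g(1) l g'(1) l]) (use e g g' in auto)
  moreover have "E F 2 0 2 g = E F 2 0 2 g'"
    by (rule TRIV_E_eq[OF T g(1) l g'(1) l]) (use p g g' in auto)
  ultimately have "E F 2 0 1 g = E F 2 0 1 g'" using F.cancel[OF g(1) g'(1)] by simp
  hence "\<psi> 1 (E F 2 0 1 g) [0, 1] = \<psi> 1 (E F 2 0 1 g') [0, 1]" by simp
  thus ?thesis using TRIV_E[OF T g(1) l, of 0 1] TRIV_E[OF T g'(1) l, of 0 1] ln[of 0] ln[of 1] g g' by simp
qed

end



locale pre = rn +
  assumes MI: "x \<in> simp X n \<Longrightarrow> \<exists>y \<in> simp X (2 * n). (\<forall>i j. i \<le> j \<and> j \<le> n \<longrightarrow> E X (2 * n) (n + i) (n + j) y = E X n i j x)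
          \<and> (\<forall>k \<le> n. E X (2 * n) (n - k) (n + k) y = one)"
  and U: "t \<in> simp X 2 \<Longrightarrow> t' \<in> simp X 2 \<Longrightarrow> E X 2 1 2 t = E X 2 1 2 t' \<Longrightarrow> E X 2 0 2 t = one \<Longrightarrow>
          E X 2 0 2 t' = one \<Longrightarrow> E X 2 0 1 t = E X 2 0 1 t'"
begin

definition nu1 where "nu1 e = (SOME u. \<exists>t \<in> simp X 2. E X 2 0 1 t = u \<and> E X 2 1 2 t = e \<and> E X 2 0 2 t = one)"

lemma nu1_spec: assumes e: "e \<in> simp X 1"
  shows "\<exists>t \<in> simp X 2. E X 2 0 1 t = nu1 e \<and> E X 2 1 2 t = e \<and> E X 2 0 2 t = one"
proof -
  obtain y where y: "y \<in> simp X (2 * 1)" and yb: "\<forall>i j. i \<le> j \<and> j \<le> 1 \<longrightarrow> E X (2 * 1) (1 + i) (1 + j) y = E X 1 i j e"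
    and ym: "\<forall>k \<le> 1. E X (2 * 1) (1 - k) (1 + k) y = one" using MI[OF e] by blast
  have "E X 2 1 2 y = e" using yb[rule_format, of 0 1] E_id[OF e] by (simp add: numeral_2_eq_2)
  moreover have "E X 2 0 2 y = one" using ym[rule_format, of 1] by (simp add: numeral_2_eq_2)
  ultimately have "\<exists>u. \<exists>t \<in> simp X 2. E X 2 0 1 t = u \<and> E X 2 1 2 t = e \<and> E X 2 0 2 t = one" using y by auto
  thus ?thesis unfolding nu1_def by (rule someI_ex)
qed

lemma nu1_closed: assumes e: "e \<in> simp X 1" shows "nu1 e \<in> simp X 1"
proof -
  obtain t where "t \<in> simp X 2" "E X 2 0 1 t = nu1 e" using nu1_spec[OF e] by blast
  thus ?thesis using E_closed[of 0 1 2 t] by simp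
qed

lemma nu1_unique: assumes t: "t \<in> simp X 2" and p: "E X 2 0 2 t = one"
  shows "E X 2 0 1 t = nu1 (E X 2 1 2 t)"
proof -
  have e: "E X 2 1 2 t \<in> simp X 1" using E_closed t by simp
  obtain t' where "t' \<in> simp X 2" "E X 2 0 1 t' = nu1 (E X 2 1 2 t)" "E X 2 1 2 t' = E X 2 1 2 t" "E X 2 0 2 t' = one"
    using nu1_spec[OF e] by blast
  thus ?thesis using U[OF t, of t'] p by simp
qed

lemma tri_closed: "Y \<in> simp X N \<Longrightarrow> a \<le> b \<Longrightarrow> b \<le> c \<Longrightarrow> c \<le> N \<Longrightarrow> sop X 2 N (tri a b c) Y \<in> simp X 2"
  by (rule closed[OF tri_mono])

lemma P: assumes Y: "Y \<in> simp X N" and o: "a \<le> b" "b \<le> c" "c \<le> d" "d \<le> N"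
  and h1: "E X N b c Y = one" and h2: "E X N a d Y = one"
  shows "E X N a b Y = nu1 (E X N c d Y)"
proof -
  have bd: "E X N b d Y = E X N c d Y" using face_left[OF Y, of b c d] o h1 by simp
  show ?thesis using nu1_unique[OF tri_closed[OF Y, of a b d]] tri_E[OF Y, of a b d] o h2 bd by simp
qed

lemma nu1_one: "nu1 one = one"
proof -
  define T where "T = sop X 2 0 (\<lambda>_. 0) v"
  have m: "mono_map 2 0 (\<lambda>_. 0)" by (simp add: mono_map_def)
  have T: "T \<in> simp X 2" unfolding T_def by (rule closed[OF m]) (simp add: X0)
  have "E X 2 i j T = one" if "i \<le> j" "j \<le> 2" for i j
    unfolding T_def using E_sop[OF m _ that, of v] X0 E_const[of v 0 0] by simp
  thus ?thesis using nu1_unique[OF T] by simp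
qed

lemma nu1_nu1: assumes e: "e \<in> simp X 1" shows "nu1 (nu1 e) = e"
proof -
  obtain t where t: "t \<in> simp X 2" "E X 2 0 1 t = nu1 e" "E X 2 1 2 t = e" "E X 2 0 2 t = one"
    using nu1_spec[OF e] by blast
  obtain Y where Y: "Y \<in> simp X (2 * 2)" and Yb: "\<forall>i j. i \<le> j \<and> j \<le> 2 \<longrightarrow> E X (2 * 2) (2 + i) (2 + j) Y = E X 2 i j t"
    and Ym: "\<forall>k \<le> 2. E X (2 * 2) (2 - k) (2 + k) Y = one" using MI[OF t(1)] by blast
  have Y4: "Y \<in> simp X 4" using Y by simp
  have b: "E X 4 (2 + i) (2 + j) Y = E X 2 i j t" if "i \<le> j" "j \<le> 2" for i j using Yb that by simp
  have m13: "E X 4 1 3 Y = one" using Ym[rule_format, of 1] by (simp add: numeral_eq_Suc)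
  have e34: "E X 4 3 4 Y = e" using b[of 1 2] t(3) by (simp add: numeral_eq_Suc)
  have e24: "E X 4 2 4 Y = one" using b[of 0 2] t(4) by (simp add: numeral_eq_Suc)
  have e23: "E X 4 2 3 Y = nu1 e" using b[of 0 1] t(2) by (simp add: numeral_eq_Suc)
  have "E X 4 1 4 Y = E X 4 3 4 Y" using face_left[OF Y4, of 1 3 4] m13 by simp
  moreover have "E X 4 1 4 Y = E X 4 1 2 Y" using face_right[OF Y4, of 1 2 4] e24 by simp
  ultimately have e12: "E X 4 1 2 Y = e" using e34 by simp
  have "E X 4 1 2 Y = nu1 (E X 4 2 3 Y)"
    using nu1_unique[OF tri_closed[OF Y4, of 1 2 3]] tri_E[OF Y4, of 1 2 3] m13 by simp
  thus ?thesis using e12 e23 by simp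
qed

definition nuX where "nuX n x = (if n = 0 then x else
   (THE u. u \<in> simp X n \<and> (\<forall>i < n. E X n i (Suc i) u = nu1 (E X n (n - Suc i) (n - i) x))))"

lemma nuX_main: assumes x: "x \<in> simp X n" and n: "n \<ge> 1"
  shows "nuX n x \<in> simp X n \<and> (\<forall>i < n. E X n i (Suc i) (nuX n x) = nu1 (E X n (n - Suc i) (n - i) x))
     \<and> (\<exists>y \<in> simp X (2 * n). (\<forall>i j. i \<le> j \<and> j \<le> n \<longrightarrow> E X (2 * n) (n + i) (n + j) y = E X n i j x)
          \<and> (\<forall>k \<le> n. E X (2 * n) (n - k) (n + k) y = one) \<and> sop X n (2 * n) (\<lambda>j. j) y = nuX n x)"
proof -
  obtain y where y: "y \<in> simp X (2 * n)" and yb: "\<And>i j. i \<le> j \<Longrightarrow> j \<le> n \<Longrightarrow> E X (2 * n) (n + i) (n + j) y = E X n i j x"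
    and ym: "\<And>k. k \<le> n \<Longrightarrow> E X (2 * n) (n - k) (n + k) y = one" using MI[OF x] by blast
  have mf: "mono_map n (2*n) (\<lambda>j. j)" by (auto simp: mono_map_def)
  define u where "u = sop X n (2 * n) (\<lambda>j. j) y"
  have u: "u \<in> simp X n" unfolding u_def by (rule closed[OF mf y])
  have ue: "E X n i (Suc i) u = nu1 (E X n (n - Suc i) (n - i) x)" if i: "i < n" for i
  proof -
    have "E X n i (Suc i) u = E X (2*n) i (Suc i) y" unfolding u_def using E_sop[OF mf y, of i "Suc i"] i by simp
    also have "\<dots> = nu1 (E X (2*n) (n + (n - Suc i)) (n + (n - i)) y)"
    proof (rule P[OF y])
      show "E X (2 * n) (Suc i) (n + (n - Suc i)) y = one" using ym[of "n - Suc i"] i by simp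
      show "E X (2 * n) i (n + (n - i)) y = one" using ym[of "n - i"] i by simp
    qed (use i in auto)
    also have "\<dots> = nu1 (E X n (n - Suc i) (n - i) x)" using yb[of "n - Suc i" "n - i"] i by simp
    finally show ?thesis .
  qed
  have uniq: "w = u" if "w \<in> simp X n \<and> (\<forall>i < n. E X n i (Suc i) w = nu1 (E X n (n - Suc i) (n - i) x))" for w
  proof (rule Neq[of w n u])
    show "w \<in> simp X n" using that by blast
    show "\<And>i. i < n \<Longrightarrow> E X n i (Suc i) w = E X n i (Suc i) u" using that ue by simp
  qed (use u n in auto)
  have "(THE u. u \<in> simp X n \<and> (\<forall>i < n. E X n i (Suc i) u = nu1 (E X n (n - Suc i) (n - i) x))) = u"
    by (rule the_equality) (use u ue uniq in blast)+
  hence "nuX n x = u" unfolding nuX_def using n by simp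
  thus ?thesis using u ue y yb ym by (auto simp: u_def)
qed

lemma nuX_closed: "x \<in> simp X n \<Longrightarrow> nuX n x \<in> simp X n"
  using nuX_main[of x n] by (cases "n = 0") (auto simp: nuX_def)

lemma nuX_Q: assumes x: "x \<in> simp X n" and ab: "a \<le> b" "b \<le> n"
  shows "E X n (n - b) (n - a) (nuX n x) = nu1 (E X n a b x)"
proof (cases "n = 0")
  case True
  thus ?thesis using ab E_const[OF x, of 0] nu1_one by (simp add: nuX_def)
next
  case False
  then obtain y where y: "y \<in> simp X (2 * n)" and yb: "\<forall>i j. i \<le> j \<and> j \<le> n \<longrightarrow> E X (2 * n) (n + i) (n + j) y = E X n i j x"
    and ym: "\<forall>k \<le> n. E X (2 * n) (n - k) (n + k) y = one" and yf: "sop X n (2 * n) (\<lambda>j. j) y = nuX n x"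
    using nuX_main[OF x] by auto
  have mf: "mono_map n (2*n) (\<lambda>j. j)" by (auto simp: mono_map_def)
  have "E X n (n - b) (n - a) (nuX n x) = E X (2*n) (n - b) (n - a) y"
    using yf[symmetric] E_sop[OF mf y, of "n - b" "n - a"] ab by simp
  also have "\<dots> = nu1 (E X (2*n) (n + a) (n + b) y)"
  proof (rule P[OF y])
    show "E X (2 * n) (n - a) (n + a) y = one" using ym ab by simp
    show "E X (2 * n) (n - b) (n + b) y = one" using ym ab by simp
  qed (use ab in auto)
  also have "\<dots> = nu1 (E X n a b x)" using yb ab by simp
  finally show ?thesis .
qed

lemma nuX_inversion: "inversion X nuX"
  unfolding inversion_def
proof (intro conjI allI impI)
  show "smap X (opp X) nuX" unfolding smap_def opp_def
  proof (intro conjI allI impI, simp_all)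
    fix n x assume "x \<in> simp X n" thus "nuX n x \<in> simp X n" by (rule nuX_closed)
  next
    fix m n \<theta> x assume a: "mono_map m n \<theta> \<and> x \<in> simp X n"
    hence \<theta>: "mono_map m n \<theta>" and x: "x \<in> simp X n" by auto
    have \<theta>o: "mono_map m n (\<lambda>j. n - \<theta> (m - j))" unfolding mono_map_def
    proof (intro conjI allI impI)
      fix i j assume "i \<le> j \<and> j \<le> m"
      hence "\<theta> (m - j) \<le> \<theta> (m - i)" using \<theta> unfolding mono_map_def by auto
      thus "n - \<theta> (m - i) \<le> n - \<theta> (m - j)" by simp
    qed simp
    have L: "nuX m (sop X m n \<theta> x) \<in> simp X m" by (rule nuX_closed[OF closed[OF \<theta> x]])
    have R: "sop X m n (\<lambda>j. n - \<theta> (m - j)) (nuX n x) \<in> simp X m" by (rule closed[OF \<theta>o nuX_closed[OF x]])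
    show "nuX m (sop X m n \<theta> x) = sop X m n (\<lambda>j. n - \<theta> (m - j)) (nuX n x)"
    proof (cases "m = 0")
      case True thus ?thesis using L R X0 by auto
    next
      case False
      show ?thesis
      proof (rule Neq[OF L R])
        show "1 \<le> m" using False by simp
        fix i assume i: "i < m"
        have "E X m i (Suc i) (nuX m (sop X m n \<theta> x)) = E X m (m - (m - i)) (m - (m - Suc i)) (nuX m (sop X m n \<theta> x))"
          using i by (simp add: Suc_diff_Suc)
        also have "\<dots> = nu1 (E X m (m - Suc i) (m - i) (sop X m n \<theta> x))"
          by (rule nuX_Q[OF closed[OF \<theta> x]]) (use i in auto)
        also have "\<dots> = nu1 (E X n (\<theta> (m - Suc i)) (\<theta> (m - i)) x)"
          using E_sop[OF \<theta> x, of "m - Suc i" "m - i"] i by simp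
        also have "\<dots> = E X n (n - \<theta> (m - i)) (n - \<theta> (m - Suc i)) (nuX n x)"
          using \<theta> i by (intro nuX_Q[OF x, symmetric]) (auto simp: mono_map_def)
        also have "\<dots> = E X m i (Suc i) (sop X m n (\<lambda>j. n - \<theta> (m - j)) (nuX n x))"
          using E_sop[OF \<theta>o nuX_closed[OF x], of i "Suc i"] i by simp
        finally show "E X m i (Suc i) (nuX m (sop X m n \<theta> x)) = E X m i (Suc i) (sop X m n (\<lambda>j. n - \<theta> (m - j)) (nuX n x))" .
      qed
    qed
  qed
next
  fix n x assume x: "x \<in> simp X n"
  show "nuX n (nuX n x) = x"
  proof (cases "n = 0")
    case True thus ?thesis by (simp add: nuX_def)
  next
    case False
    have nx: "nuX n x \<in> simp X n" by (rule nuX_closed[OF x])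
    show ?thesis
    proof (rule Neq[OF nuX_closed[OF nx] x])
      show "1 \<le> n" using False by simp
      fix i assume i: "i < n"
      have "E X n i (Suc i) (nuX n (nuX n x)) = E X n (n - (n - i)) (n - (n - Suc i)) (nuX n (nuX n x))"
        using i by (simp add: Suc_diff_Suc)
      also have "\<dots> = nu1 (E X n (n - Suc i) (n - i) (nuX n x))" by (rule nuX_Q[OF nx]) (use i in auto)
      also have "\<dots> = nu1 (nu1 (E X n i (Suc i) x))" using nuX_Q[OF x, of i "Suc i"] i by (simp add: Suc_diff_Suc)
      also have "\<dots> = E X n i (Suc i) x" using nu1_nu1 E_closed[OF _ _ x, of i "Suc i"] i by simp
      finally show "E X n i (Suc i) (nuX n (nuX n x)) = E X n i (Suc i) x" .
    qed
  qed
next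
  fix n x assume a: "1 \<le> n \<and> x \<in> simp X n"
  hence x: "x \<in> simp X n" and n: "1 \<le> n" by auto
  obtain y where y: "y \<in> simp X (2 * n)" and yb: "\<forall>i j. i \<le> j \<and> j \<le> n \<longrightarrow> E X (2 * n) (n + i) (n + j) y = E X n i j x"
    and ym: "\<forall>k \<le> n. E X (2 * n) (n - k) (n + k) y = one" and yf: "sop X n (2 * n) (\<lambda>j. j) y = nuX n x"
    using nuX_main[OF x n] by auto
  have mf: "mono_map n (2*n) (\<lambda>j. j)" by (auto simp: mono_map_def)
  have front: "E X (2*n) i (Suc i) y = E X n i (Suc i) (nuX n x)" if "i < n" for i
    using yf E_sop[OF mf y, of i "Suc i"] that by simp
  have en: "enum_op X (2 * n) y = enum_op X n (nuX n x) @ enum_op X n x"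
    unfolding enum_E[OF y] enum_E[OF x] enum_E[OF nuX_closed[OF x]]
  proof (rule nth_equalityI)
    show "length (map (\<lambda>i. E X (2 * n) i (Suc i) y) [0..<2 * n]) =
      length (map (\<lambda>i. E X n i (Suc i) (nuX n x)) [0..<n] @ map (\<lambda>i. E X n i (Suc i) x) [0..<n])" by simp
    fix i assume "i < length (map (\<lambda>i. E X (2 * n) i (Suc i) y) [0..<2 * n])"
    hence i: "i < 2 * n" by simp
    show "map (\<lambda>i. E X (2 * n) i (Suc i) y) [0..<2 * n] ! i =
      (map (\<lambda>i. E X n i (Suc i) (nuX n x)) [0..<n] @ map (\<lambda>i. E X n i (Suc i) x) [0..<n]) ! i"
    proof (cases "i < n")
      case True thus ?thesis using front i by (simp add: nth_append)
    next
      case False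
      have "E X (2*n) i (Suc i) y = E X (2*n) (n + (i - n)) (n + Suc (i - n)) y" using False by simp
      also have "\<dots> = E X n (i - n) (Suc (i - n)) x" using yb[rule_format, of "i - n" "Suc (i - n)"] i False by linarith
      moreover have "[0..<n] ! (i - n) = i - n" using False i by simp
      ultimately show ?thesis using False i by (simp add: nth_append)
    qed
  qed
  have "prod_op X (2 * n) y = one" using prod_E[OF y] ym[rule_format, of n] by (simp add: mult_2)
  thus "\<exists>y\<in>simp X (2 * n). enum_op X (2 * n) y = enum_op X n (nuX n x) @ enum_op X n x \<and> prod_op X (2 * n) y = one"
    using y en by blast
qed

end

sublocale bun \<subseteq> Xp: pre X
proof unfold_locales
  fix x n assume "x \<in> simp X n"
  thus "\<exists>y \<in> simp X (2 * n). (\<forall>i j. i \<le> j \<and> j \<le> n \<longrightarrow> E X (2 * n) (n + i) (n + j) y = E X n i j x)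
          \<and> (\<forall>k \<le> n. E X (2 * n) (n - k) (n + k) y = X.one)" by (rule X_MI)
next
  fix t t' assume "t \<in> simp X 2" "t' \<in> simp X 2" "E X 2 1 2 t = E X 2 1 2 t'" "E X 2 0 2 t = X.one" "E X 2 0 2 t' = X.one"
  thus "E X 2 0 1 t = E X 2 0 1 t'" by (rule X_U)
qed

theorem theoremA:
  fixes X :: "'x sset" and B :: "'b sset" and F :: "'f sset"
    and \<tau> :: "nat \<Rightarrow> 'x \<Rightarrow> 'b"
  assumes "simplicial_set X" and "simplicial_set B" and "simplicial_set F"
    and "fibre_bundle X B F \<tau>"
    and "partial_group B" and "partial_group F"
  shows "partial_group X"
proof -
  obtain nB where nB: "inversion B nB" using assms(5) unfolding partial_group_def by blast
  obtain nF where nF: "inversion F nF" using assms(6) unfolding partial_group_def by blast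
  have pB: "pg B nB" using assms(2,5) nB unfolding partial_group_def
    by (intro pg.intro rn.intro ss.intro rn_axioms.intro pg_axioms.intro) auto
  have pF: "pg F nF" using assms(3,6) nF unfolding partial_group_def
    by (intro pg.intro rn.intro ss.intro rn_axioms.intro pg_axioms.intro) auto
  interpret bun X B F nB nF \<tau>
    by (intro bun.intro ss.intro pB pF bun_axioms.intro assms(1,4))
  show ?thesis unfolding partial_group_def using assms(1) X_reduced X_Nsimp Xp.nuX_inversion by blast
qed


end
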